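(* Let $\Sigma$ be a complete fan in $N_{\mathbb R}\cong\mathbb R^2$ and $\mathbb L$ a combinatorially indecomposable tropical Lagrangian multi-section of rank $r$ over $\Sigma$. If $\mathbb L$ is unobstructed, with local system $\mathcal L$ on $L\setminus S'$ and consistent collection $\Theta$, then $\mathcal L$ is (up to isomorphism) the unique $\mathbb C^\times$-local system on $L\setminus S'$ whose monodromy around the unique ramification point of $\pi:L\to N_{\mathbb R}$ is $(-1)^{r+1}$.
   Context: $N$ lattice of rank $2$, $M=\mathrm{Hom}(N,\mathbb Z)$, $\Sigma(k)$ the $k$-dimensional cones, $\sigma^\vee$ dual cones, $U(\sigma)=\mathrm{Spec}\,\mathbb C[\sigma^\vee\cap M]$, $z^m$ monomials. $\mathbb L=(L,\Sigma_L,\mu,\pi,\varphi)$: a cone complex $L$ (finite union of closed rational polyhedral cones glued along faces), weights $\mu$, a branched covering $\pi$ onto $(N_{\mathbb R},\Sigma)$ mapping cones homeomorphically onto cones with weighted fibre count $r$, and $\varphi$ continuous, integral linear on cones; $m(\sigma')\in M$ its slope on a maximal cone; $\sigma^{(1)},\dots,\sigma^{(r)}$ the lifts of $\sigma\in\Sigma(2)$ with multiplicity. Combinatorial indecomposability (not combinatorially equivalent to a combinatorial union of two connected ones) gives: $L$ connected, separable (distinct lifts of a ray carry distinct restrictions of $\varphi$), and ramification locus $S'=L^{(0)}=\pi^{-1}(0)$ a single point. For adjacent $\sigma_1,\sigma_2\in\Sigma(2)$ (sharing a ray), each lift $\sigma_1^{(\alpha)}$ determines a unique lift $\sigma_2^{(\beta)}$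 sharing a ray with it. A $\mathbb C^\times$-local system $\mathcal L$ on $L\setminus S'$ is represented by constants $g^{sf}_{\sigma_1^{(\alpha)}\sigma_2^{(\beta)}}\in\mathbb C^\times$ on adjacent pairs of lifts. $\mathcal E_\sigma$: trivial rank $r$ bundle on $U(\sigma)$ with frame $1(\sigma^{(\alpha)})$ of torus weight $m(\sigma^{(\alpha)})$. $G^{sf}_{\sigma_1\sigma_2}:1(\sigma_1^{(\alpha)})\mapsto g^{sf}_{\sigma_1^{(\alpha)}\sigma_2^{(\beta)}}z^{m(\sigma_1^{(\alpha)})-m(\sigma_2^{(\beta)})}1(\sigma_2^{(\beta)})$. For $\tau=\sigma_1\cap\sigma_2\in\Sigma(1)$ and a cone $\omega'$ of $L$, $N_\tau(\omega')$ is the endomorphism of $\mathcal E_{\sigma_1}|_{U(\tau)}$ with $(\alpha,\beta)$-entry $n^{(\alpha\beta)}_\tau(\omega')z^{m(\sigma_1^{(\alpha)})-m(\sigma_1^{(\beta)})}$ ($n$'s complex constants) if $\omega'\subset\sigma_1^{(\alpha)}\cap\sigma_1^{(\beta)}$, $\alpha\ne\beta$, $m(\sigma_1^{(\alpha)})-m(\sigma_1^{(\beta)})\in\tau^\vee\cap M$, and $0$ otherwise; $\Theta_{\sigma_1\sigma_2}=\prod_{\omega'\in S'_\tau}\exp N_\tau(\omega')$ with $S'_\tau=\{\sigma_1^{(\alpha)}\cap\sigma_1^{(\beta)}:m(\sigma_1^{(\alpha)})-m(\sigma_1^{(\beta)})\in\tau^\vee\cap M\}$; $G_{\sigma_1\sigma_2}=G^{sf}_{\sigma_1\sigma_2}\circ\Theta_{\sigma_1\sigma_2}$.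 $\Theta$ is consistent if for every $\omega\in\Sigma$ and every cycle $\sigma_1,\dots,\sigma_{l+1}=\sigma_1$ of maximal cones containing $\omega$ with consecutive ones sharing a ray, $G_{\sigma_l\sigma_{l+1}}|_{U(\omega)}\circ\cdots\circ G_{\sigma_1\sigma_2}|_{U(\omega)}=\mathrm{Id}$. $\mathbb L$ is unobstructed if there exist $\mathcal L$ and a consistent $\Theta$. *)

theory Defs
  imports Complex_Main
begin

section \<open>Lattice data: N = M = Z^2\<close>

definition pair_ip :: "int \<times> int \<Rightarrow> int \<times> int \<Rightarrow> int" where
  "pair_ip u w = fst u * fst w + snd u * snd w"

definition mdiff :: "int \<times> int \<Rightarrow> int \<times> int \<Rightarrow> int \<times> int" where
  "mdiff u w = (fst u - fst w, snd u - snd w)"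

definition det2 :: "int \<times> int \<Rightarrow> int \<times> int \<Rightarrow> int" where
  "det2 u w = fst u * snd w - snd u * fst w"

text \<open>Rays v 0, ..., v (k-1) in counterclockwise order; maximal cone i is spanned by
  v i and v ((i+1) mod k); ray i is the common ray of maximal cones (i-1) mod k and i.\<close>

definition cone2 :: "int \<times> int \<Rightarrow> int \<times> int \<Rightarrow> (real \<times> real) set" where
  "cone2 u w = {(a * of_int (fst u) + b * of_int (fst w), a * of_int (snd u) + b * of_int (snd w))
                 | a b. a \<ge> 0 \<and> b \<ge> 0}"

definition cone2_interior :: "int \<times> int \<Rightarrow> int \<times> int \<Rightarrow> (real \<times> real) set" where
  "cone2_interior u w = {(a * of_int (fst u) + b * of_int (fst w), a * of_int (snd u) + b * of_int (snd w))
                 | a b. a > 0 \<and> b > 0}"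

definition complete_fan2 :: "nat \<Rightarrow> (nat \<Rightarrow> int \<times> int) \<Rightarrow> bool" where
  "complete_fan2 k v \<longleftrightarrow> k \<ge> 3
     \<and> (\<forall>i<k. det2 (v i) (v (Suc i mod k)) > 0)
     \<and> (\<Union>i<k. cone2 (v i) (v (Suc i mod k))) = UNIV
     \<and> (\<forall>i<k. \<forall>j<k. i \<noteq> j \<longrightarrow>
           cone2_interior (v i) (v (Suc i mod k)) \<inter> cone2_interior (v j) (v (Suc j mod k)) = {})"

text \<open>Lift alpha < r of maximal cone i; p i alpha is the unique lift of maximal cone (i+1) mod k
  sharing a ray (a lift of ray (i+1) mod k) with it; m i alpha is the slope of phi on that lift.\<close>

definition trop_multisection ::
  "nat \<Rightarrow> (nat \<Rightarrow> int \<times> int) \<Rightarrow> nat \<Rightarrow> (nat \<Rightarrow> nat \<Rightarrow> nat) \<Rightarrow> (nat \<Rightarrow> nat \<Rightarrow> int \<times> int) \<Rightarrow> bool" where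
  "trop_multisection k v r p m \<longleftrightarrow> r \<ge> 1
     \<and> (\<forall>i<k. bij_betw (p i) {..<r} {..<r})
     \<and> (\<forall>i<k. \<forall>\<alpha><r. pair_ip (m i \<alpha>) (v (Suc i mod k))
                        = pair_ip (m (Suc i mod k) (p i \<alpha>)) (v (Suc i mod k)))"

text \<open>Separability: distinct lifts of a ray carry distinct restrictions of phi.\<close>
definition separable ::
  "nat \<Rightarrow> (nat \<Rightarrow> int \<times> int) \<Rightarrow> nat \<Rightarrow> (nat \<Rightarrow> nat \<Rightarrow> int \<times> int) \<Rightarrow> bool" where
  "separable k v r m \<longleftrightarrow>
     (\<forall>i<k. \<forall>\<alpha><r. \<forall>\<beta><r. \<alpha> \<noteq> \<beta> \<longrightarrow>
         pair_ip (m i \<alpha>) (v i) \<noteq> pair_ip (m i \<beta>) (v i)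
       \<and> pair_ip (m i \<alpha>) (v (Suc i mod k)) \<noteq> pair_ip (m i \<beta>) (v (Suc i mod k)))"

definition lstep :: "nat \<Rightarrow> (nat \<Rightarrow> nat \<Rightarrow> nat) \<Rightarrow> nat \<times> nat \<Rightarrow> nat \<times> nat" where
  "lstep k p x = (Suc (fst x) mod k, p (fst x) (snd x))"

definition link_edges :: "nat \<Rightarrow> nat \<Rightarrow> (nat \<Rightarrow> nat \<Rightarrow> nat) \<Rightarrow> ((nat \<times> nat) \<times> (nat \<times> nat)) set" where
  "link_edges k r p = {(x, lstep k p x) | x. fst x < k \<and> snd x < r}"

text \<open>L minus S' is connected (its adjacency graph of maximal lifts is connected).\<close>
definition link_connected :: "nat \<Rightarrow> nat \<Rightarrow> (nat \<Rightarrow> nat \<Rightarrow> nat) \<Rightarrow> bool" where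
  "link_connected k r p \<longleftrightarrow>
     (\<forall>i<k. \<forall>\<alpha><r. \<forall>j<k. \<forall>\<beta><r.
        ((i, \<alpha>), (j, \<beta>)) \<in> (link_edges k r p \<union> (link_edges k r p)\<inverse>)\<^sup>*)"

text \<open>g i alpha is the constant of the local system on the adjacent pair
  (lift alpha of cone i, lift p i alpha of cone (i+1) mod k); the reverse pair carries the inverse.\<close>
definition loc_sys :: "nat \<Rightarrow> nat \<Rightarrow> (nat \<Rightarrow> nat \<Rightarrow> complex) \<Rightarrow> bool" where
  "loc_sys k r g \<longleftrightarrow> (\<forall>i<k. \<forall>\<alpha><r. g i \<alpha> \<noteq> 0)"

definition ls_iso :: "nat \<Rightarrow> nat \<Rightarrow> (nat \<Rightarrow> nat \<Rightarrow> nat) \<Rightarrow> (nat \<Rightarrow> nat \<Rightarrow> complex)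
                       \<Rightarrow> (nat \<Rightarrow> nat \<Rightarrow> complex) \<Rightarrow> bool" where
  "ls_iso k r p g g' \<longleftrightarrow> (\<exists>h :: nat \<Rightarrow> nat \<Rightarrow> complex.
      (\<forall>i<k. \<forall>\<alpha><r. h i \<alpha> \<noteq> 0)
    \<and> (\<forall>i<k. \<forall>\<alpha><r. g' i \<alpha> * h i \<alpha> = h (Suc i mod k) (p i \<alpha>) * g i \<alpha>))"

text \<open>Holonomy along the lift (starting at lift x) of the counterclockwise walk around the origin.\<close>
fun holonomy :: "nat \<Rightarrow> (nat \<Rightarrow> nat \<Rightarrow> nat) \<Rightarrow> (nat \<Rightarrow> nat \<Rightarrow> complex) \<Rightarrow> nat \<Rightarrow> nat \<times> nat \<Rightarrow> complex" where
  "holonomy k p g 0 x = 1"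
| "holonomy k p g (Suc l) x = g (fst x) (snd x) * holonomy k p g l (lstep k p x)"

text \<open>Monodromy around the ramification point S': a small loop around S' in L maps to a loop
  going r times around the origin, i.e. k*r steps through maximal lifts.\<close>
definition monodromy :: "nat \<Rightarrow> nat \<Rightarrow> (nat \<Rightarrow> nat \<Rightarrow> nat) \<Rightarrow> (nat \<Rightarrow> nat \<Rightarrow> complex) \<Rightarrow> complex" where
  "monodromy k r p g = holonomy k p g (k * r) (0, 0)"

section \<open>r x r matrices (acting on row vectors: entry (a,b) = coefficient of 1(b) in image of 1(a))\<close>

type_synonym cmat = "nat \<Rightarrow> nat \<Rightarrow> complex"

definition mid :: cmat where "mid a b = (if a = b then 1 else 0)"

definition mmul :: "nat \<Rightarrow> cmat \<Rightarrow> cmat \<Rightarrow> cmat" where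
  "mmul r A B a b = (\<Sum>c<r. A a c * B c b)"

fun mpow :: "nat \<Rightarrow> cmat \<Rightarrow> nat \<Rightarrow> cmat" where
  "mpow r A 0 = mid"
| "mpow r A (Suc j) = mmul r (mpow r A j) A"

definition mexp :: "nat \<Rightarrow> cmat \<Rightarrow> cmat" where
  "mexp r A a b = (\<Sum>j. mpow r A j a b / of_nat (fact j))"

definition zmon :: "complex \<times> complex \<Rightarrow> int \<times> int \<Rightarrow> complex" where
  "zmon z e = fst z powi fst e * snd z powi snd e"

definition adjacent :: "nat \<Rightarrow> nat \<Rightarrow> nat \<Rightarrow> bool" where
  "adjacent k a b \<longleftrightarrow> a < k \<and> b < k \<and> (b = Suc a mod k \<or> a = Suc b mod k)"

definition gsf :: "nat \<Rightarrow> (nat \<Rightarrow> nat \<Rightarrow> nat) \<Rightarrow> (nat \<Rightarrow> nat \<Rightarrow> complex)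
                    \<Rightarrow> nat \<Rightarrow> nat \<Rightarrow> nat \<Rightarrow> nat \<Rightarrow> complex" where
  "gsf k p g a \<alpha> b \<beta> =
     (if b = Suc a mod k then (if \<beta> = p a \<alpha> then g a \<alpha> else 0)
      else if a = Suc b mod k then (if p b \<beta> = \<alpha> then inverse (g b \<beta>) else 0)
      else 0)"

definition Gsf_mat :: "nat \<Rightarrow> (nat \<Rightarrow> nat \<Rightarrow> nat) \<Rightarrow> (nat \<Rightarrow> nat \<Rightarrow> int \<times> int) \<Rightarrow> (nat \<Rightarrow> nat \<Rightarrow> complex)
                        \<Rightarrow> complex \<times> complex \<Rightarrow> nat \<Rightarrow> nat \<Rightarrow> cmat" where
  "Gsf_mat k p m g z a b \<alpha> \<beta> = gsf k p g a \<alpha> b \<beta> * zmon z (mdiff (m a \<alpha>) (m b \<beta>))"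

text \<open>The ray tau = sigma_a \<inter> sigma_b of adjacent maximal cones a, b.\<close>
definition tau :: "nat \<Rightarrow> nat \<Rightarrow> nat \<Rightarrow> nat" where
  "tau k a b = (if b = Suc a mod k then b else a)"

text \<open>N_tau for the pair (sigma_a, sigma_b); by separability the only cone of L contained in
  two distinct lifts of sigma_a is the apex S', so Theta_{ab} = exp N_tau(S').
  n a b alpha beta are the complex constants n_tau^{(alpha beta)}(S').\<close>
definition N_mat :: "nat \<Rightarrow> (nat \<Rightarrow> int \<times> int) \<Rightarrow> (nat \<Rightarrow> nat \<Rightarrow> int \<times> int)
                      \<Rightarrow> (nat \<Rightarrow> nat \<Rightarrow> nat \<Rightarrow> nat \<Rightarrow> complex) \<Rightarrow> complex \<times> complex \<Rightarrow> nat \<Rightarrow> nat \<Rightarrow> cmat" where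
  "N_mat k v m n z a b \<alpha> \<beta> =
     (if \<alpha> \<noteq> \<beta> \<and> pair_ip (mdiff (m a \<alpha>) (m a \<beta>)) (v (tau k a b)) \<ge> 0
      then n a b \<alpha> \<beta> * zmon z (mdiff (m a \<alpha>) (m a \<beta>)) else 0)"

text \<open>G_{ab} = G^sf_{ab} o Theta_{ab} (Theta applied first; row-vector convention).\<close>
definition G_mat :: "nat \<Rightarrow> (nat \<Rightarrow> int \<times> int) \<Rightarrow> nat \<Rightarrow> (nat \<Rightarrow> nat \<Rightarrow> nat) \<Rightarrow> (nat \<Rightarrow> nat \<Rightarrow> int \<times> int)
                      \<Rightarrow> (nat \<Rightarrow> nat \<Rightarrow> complex) \<Rightarrow> (nat \<Rightarrow> nat \<Rightarrow> nat \<Rightarrow> nat \<Rightarrow> complex)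
                      \<Rightarrow> complex \<times> complex \<Rightarrow> nat \<Rightarrow> nat \<Rightarrow> cmat" where
  "G_mat k v r p m g n z a b = mmul r (mexp r (N_mat k v m n z a b)) (Gsf_mat k p m g z a b)"

text \<open>Composite G_{c_{l-1} c_l} o ... o G_{c_0 c_1} along a walk.\<close>
fun walk_prod :: "nat \<Rightarrow> (nat \<Rightarrow> nat \<Rightarrow> cmat) \<Rightarrow> nat list \<Rightarrow> cmat" where
  "walk_prod r G (a # b # cs) = mmul r (G a b) (walk_prod r G (b # cs))"
| "walk_prod r G _ = mid"

datatype fan_cone = ZeroC | RayC nat | MaxC nat

definition fan_cones :: "nat \<Rightarrow> fan_cone set" where
  "fan_cones k = {ZeroC} \<union> RayC ` {..<k} \<union> MaxC ` {..<k}"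

fun face_of_max :: "nat \<Rightarrow> fan_cone \<Rightarrow> nat \<Rightarrow> bool" where
  "face_of_max k ZeroC i = True"
| "face_of_max k (RayC j) i = (j = i \<or> j = Suc i mod k)"
| "face_of_max k (MaxC j) i = (j = i)"

definition cycle_around :: "nat \<Rightarrow> fan_cone \<Rightarrow> nat list \<Rightarrow> bool" where
  "cycle_around k \<omega> cs \<longleftrightarrow> length cs \<ge> 2 \<and> hd cs = last cs
     \<and> (\<forall>c\<in>set cs. c < k \<and> face_of_max k \<omega> c)
     \<and> (\<forall>j. Suc j < length cs \<longrightarrow> adjacent k (cs ! j) (cs ! Suc j))"

text \<open>Consistency: the composite around each cycle is the identity on U(omega); since all
  maps are given by Laurent monomial matrices, this is tested on the dense torus.\<close>
definition Theta_consistent :: "nat \<Rightarrow> (nat \<Rightarrow> int \<times> int) \<Rightarrow> nat \<Rightarrow> (nat \<Rightarrow> nat \<Rightarrow> nat)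
     \<Rightarrow> (nat \<Rightarrow> nat \<Rightarrow> int \<times> int) \<Rightarrow> (nat \<Rightarrow> nat \<Rightarrow> complex) \<Rightarrow> (nat \<Rightarrow> nat \<Rightarrow> nat \<Rightarrow> nat \<Rightarrow> complex) \<Rightarrow> bool" where
  "Theta_consistent k v r p m g n \<longleftrightarrow>
     (\<forall>\<omega>\<in>fan_cones k. \<forall>cs. cycle_around k \<omega> cs \<longrightarrow>
        (\<forall>z. fst z \<noteq> 0 \<and> snd z \<noteq> 0 \<longrightarrow>
           (\<forall>\<alpha><r. \<forall>\<beta><r. walk_prod r (G_mat k v r p m g n z) cs \<alpha> \<beta> = mid \<alpha> \<beta>)))"

end

theory Submission imports Defs "HOL-Combinatorics.Cycles" "Jordan_Normal_Form.Determinant" begin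


lemma hol_prod: "holonomy k p g l x = (\<Prod>j<l. g (fst ((lstep k p ^^ j) x)) (snd ((lstep k p ^^ j) x)))"
proof (induction l arbitrary: x)
  case 0 then show ?case by simp
next
  case (Suc l)
  show ?case unfolding prod.lessThan_Suc_shift by (simp add: Suc funpow_Suc_right del: funpow.simps)
qed

lemma sign_cycle: "distinct cs \<Longrightarrow> sign (cycle_of_list cs) = (-1) ^ (length cs - 1)"
proof (induction cs rule: cycle_of_list.induct)
  case (1 i j cs)
  have ij: "i \<noteq> j" using 1 by auto
  have "sign (cycle_of_list (i # j # cs)) = sign (transpose i j \<circ> cycle_of_list (j # cs))"
    by (simp only: cycle_of_list.simps)
  also have "\<dots> = sign (transpose i j) * sign (cycle_of_list (j # cs))"
    by (rule sign_compose[OF permutation_swap_id permutation_of_cycle])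
  also have "\<dots> = - ((-1) ^ (length cs))" using 1 ij by (simp add: sign_swap_id)
  finally have X: "sign (cycle_of_list (i # j # cs)) = - ((-1) ^ (length cs))" .
  have Y: "(-1::int) ^ (length (i # j # cs) - 1) = - ((-1) ^ (length cs))" by simp
  from X Y show ?case by (simp only:)
qed simp_all

definition toM :: "nat \<Rightarrow> cmat \<Rightarrow> complex mat" where "toM r A = mat r r (\<lambda>(i,j). A i j)"

lemma toM_carrier: "toM r A \<in> carrier_mat r r" unfolding toM_def by simp

lemma toM_mul: "toM r (mmul r A B) = toM r A * toM r B"
  by (rule eq_matI) (auto simp: toM_def mmul_def scalar_prod_def atLeast0LessThan intro: sum.cong)

lemma toM_mid: "toM r mid = 1\<^sub>m r"
  by (rule eq_matI) (auto simp: toM_def mid_def)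

lemma det_toM: "det (toM r A) = (\<Sum>q | q permutes {0..<r}. signof q * (\<Prod>i=0..<r. A i (q i)))"
  by (subst det_def'[OF toM_carrier]) (simp add: toM_def)

lemma det_perm_mat:
  assumes sg: "\<sigma> permutes {0..<r}"
    and A: "\<And>a b. a < r \<Longrightarrow> b < r \<Longrightarrow> A a b = (if b = \<sigma> a then c a else 0)"
  shows "det (toM r A) = signof \<sigma> * (\<Prod>a<r. c a)"
proof -
  let ?t = "\<lambda>q. signof q * (\<Prod>i=0..<r. A i (q i)) :: complex"
  have fin: "finite {q. q permutes {0..<r}}" by (rule finite_permutations) simp
  have z: "?t q = 0" if q: "q \<in> {q. q permutes {0..<r}} - {\<sigma>}" for q
  proof -
    have qp: "q permutes {0..<r}" and qs: "q \<noteq> \<sigma>" using q by auto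
    obtain a where a: "q a \<noteq> \<sigma> a" using qs by auto
    have ar: "a < r"
    proof (rule ccontr)
      assume "\<not> a < r"
      hence "q a = a" "\<sigma> a = a" using permutes_not_in[OF qp] permutes_not_in[OF sg] by auto
      thus False using a by simp
    qed
    have "q a < r" using permutes_in_image[OF qp] ar by simp
    hence "A a (q a) = 0" using A[OF ar] a by simp
    hence "(\<Prod>i=0..<r. A i (q i)) = 0" using ar by (intro prod_zero) auto
    thus ?thesis by simp
  qed
  have "det (toM r A) = ?t \<sigma> + sum ?t ({q. q permutes {0..<r}} - {\<sigma>})"
    unfolding det_toM using sum.remove[OF fin, of \<sigma> ?t] sg by simp
  also have "sum ?t ({q. q permutes {0..<r}} - {\<sigma>}) = 0" using z by (intro sum.neutral) blast
  also have "(\<Prod>i=0..<r. A i (\<sigma> i)) = (\<Prod>a<r. c a)"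
    using A permutes_in_image[OF sg] by (auto simp: atLeast0LessThan intro: prod.cong)
  finally show ?thesis by simp
qed

lemma det_tri:
  fixes key :: "nat \<Rightarrow> int"
  assumes inj: "inj_on key {0..<r}"
    and diag: "\<And>a. a < r \<Longrightarrow> A a a = 1"
    and off: "\<And>a b. a < r \<Longrightarrow> b < r \<Longrightarrow> a \<noteq> b \<Longrightarrow> A a b \<noteq> 0 \<Longrightarrow> key b < key a"
  shows "det (toM r A) = 1"
proof -
  let ?t = "\<lambda>q. signof q * (\<Prod>i=0..<r. A i (q i)) :: complex"
  have fin: "finite {q. q permutes {0..<r}}" by (rule finite_permutations) simp
  have z: "?t q = 0" if q: "q \<in> {q. q permutes {0..<r}} - {id}" for q
  proof (rule ccontr)
    assume nz: "?t q \<noteq> 0"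
    have qp: "q permutes {0..<r}" and qs: "q \<noteq> id" using q by auto
    have "(\<Prod>i=0..<r. A i (q i)) \<noteq> 0" using nz by auto
    hence Anz: "A i (q i) \<noteq> 0" if "i < r" for i using that by (auto simp: prod_zero_iff)
    have qr: "q i < r" if "i < r" for i using permutes_in_image[OF qp] that by simp
    have le: "key (q i) \<le> key i" if "i < r" for i
      using off[OF that qr[OF that] _ Anz[OF that]] by force
    have "sum key {0..<r} = sum (key \<circ> q) {0..<r}" by (rule sum.permute[OF qp])
    hence "(\<Sum>i=0..<r. key i - key (q i)) = 0" by (simp add: sum_subtractf)
    moreover have nn: "\<And>i. i \<in> {0..<r} \<Longrightarrow> key i - key (q i) \<ge> 0" using le by auto
    ultimately have "\<forall>i\<in>{0..<r}. key i - key (q i) = 0"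
      using sum_nonneg_eq_0_iff[of "{0..<r}" "\<lambda>i. key i - key (q i)", OF _ nn] by simp
    hence "q i = i" if "i < r" for i using inj qr[OF that] that unfolding inj_on_def by auto
    moreover have "q i = i" if "\<not> i < r" for i using permutes_not_in[OF qp] that by simp
    ultimately have "q = id" by (auto simp: fun_eq_iff)
    thus False using qs by simp
  qed
  have idp: "id permutes {0..<r}" by (rule permutes_id)
  have "det (toM r A) = ?t id + sum ?t ({q. q permutes {0..<r}} - {id})"
    unfolding det_toM using sum.remove[OF fin, of id ?t] idp by simp
  also have "sum ?t ({q. q permutes {0..<r}} - {id}) = 0" using z by (intro sum.neutral) blast
  finally show ?thesis using diag by simp
qed

lemma mpow_tri:
  fixes key :: "nat \<Rightarrow> int"
  assumes off: "\<And>a b. a < r \<Longrightarrow> b < r \<Longrightarrow> N a b \<noteq> 0 \<Longrightarrow> key b < key a"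
  shows "a < r \<Longrightarrow> b < r \<Longrightarrow> mpow r N j a b \<noteq> 0 \<Longrightarrow> (j = 0 \<and> a = b) \<or> key b < key a"
proof (induction j arbitrary: b)
  case 0 then show ?case by (simp add: mid_def split: if_splits)
next
  case (Suc j)
  have "(\<Sum>c<r. mpow r N j a c * N c b) \<noteq> 0" using Suc.prems by (simp add: mmul_def)
  then obtain c where c: "c < r" "mpow r N j a c * N c b \<noteq> 0"
    by (metis (no_types, lifting) lessThan_iff sum.neutral)
  have "key b < key c" using off[OF c(1) Suc.prems(2)] c by simp
  moreover have "(j = 0 \<and> a = c) \<or> key c < key a" using Suc.IH[OF Suc.prems(1) c(1)] c by simp
  ultimately show ?case by auto
qed

lemma mexp_tri:
  fixes key :: "nat \<Rightarrow> int"
  assumes off: "\<And>a b. a < r \<Longrightarrow> b < r \<Longrightarrow> N a b \<noteq> 0 \<Longrightarrow> key b < key a"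
  shows "\<And>a. a < r \<Longrightarrow> mexp r N a a = 1"
    and "\<And>a b. a < r \<Longrightarrow> b < r \<Longrightarrow> a \<noteq> b \<Longrightarrow> mexp r N a b \<noteq> 0 \<Longrightarrow> key b < key a"
proof -
  fix a assume a: "a < r"
  have "(\<lambda>j. mpow r N j a a / of_nat (fact j)) = (\<lambda>j. if j = 0 then 1 else 0)"
  proof
    fix j
    show "mpow r N j a a / of_nat (fact j) = (if j = 0 then 1 else 0)"
      using mpow_tri[where N=N and key=key and r=r and j=j, OF off a a] by (cases "j = 0") (auto simp: mid_def)
  qed
  moreover have "(\<lambda>j. if j = 0 then 1 else 0 :: complex) sums 1"
    using sums_single[of 0 "\<lambda>_. 1 :: complex"] by simp
  ultimately show "mexp r N a a = 1" unfolding mexp_def by (simp add: sums_iff)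
next
  fix a b assume ab: "a < r" "b < r" "a \<noteq> b" "mexp r N a b \<noteq> 0"
  show "key b < key a"
  proof (rule ccontr)
    assume nk: "\<not> key b < key a"
    have "(\<lambda>j. mpow r N j a b / of_nat (fact j)) = (\<lambda>j. 0)"
      using mpow_tri[where N=N and key=key and r=r, OF off ab(1,2)] nk ab(3) by (auto simp: fun_eq_iff)
    hence "mexp r N a b = 0" unfolding mexp_def by simp
    thus False using ab by simp
  qed
qed

lemma walk_det:
  "det (toM r (walk_prod r G (map f [a..<Suc (a + l)]))) = (\<Prod>i\<in>{a..<a+l}. det (toM r (G (f i) (f (Suc i)))))"
proof (induction l arbitrary: a)
  case 0 then show ?case by (simp add: toM_mid)
next
  case (Suc l)
  have e: "map f [a..<Suc (a + Suc l)] = f a # map f [Suc a..<Suc (Suc a + l)]"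
    by (subst upt_conv_Cons) simp_all
  have e2: "map f [Suc a..<Suc (Suc a + l)] = f (Suc a) # map f [Suc (Suc a)..<Suc (Suc a + l)]"
    by (subst upt_conv_Cons) simp_all
  have "walk_prod r G (map f [a..<Suc (a + Suc l)]) = mmul r (G (f a) (f (Suc a))) (walk_prod r G (map f [Suc a..<Suc (Suc a + l)]))"
    by (simp only: e e2 walk_prod.simps)
  hence "det (toM r (walk_prod r G (map f [a..<Suc (a + Suc l)]))) = det (toM r (G (f a) (f (Suc a)))) * det (toM r (walk_prod r G (map f [Suc a..<Suc (Suc a + l)])))"
    by (simp add: toM_mul det_mult[OF toM_carrier toM_carrier])
  also have "\<dots> = det (toM r (G (f a) (f (Suc a)))) * (\<Prod>i\<in>{Suc a..<Suc a+l}. det (toM r (G (f i) (f (Suc i)))))"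
    using Suc.IH[of "Suc a"] by simp
  also have "\<dots> = (\<Prod>i\<in>{a..<a+Suc l}. det (toM r (G (f i) (f (Suc i)))))"
    by (simp add: prod.atLeast_Suc_lessThan)
  finally show ?case .
qed

lemma det_G:
  assumes i: "i < k" and sep: "separable k v r m" and sp: "\<sigma> permutes {0..<r}"
    and sv: "\<And>a. a < r \<Longrightarrow> \<sigma> a = p i a"
  shows "det (toM r (G_mat k v r p m g n (1,1) i (Suc i mod k))) = signof \<sigma> * (\<Prod>a<r. g i a)"
proof -
  define b where "b = Suc i mod k"
  define key where "key = (\<lambda>a. pair_ip (m i a) (v b))"
  define NN where "NN = N_mat k v m n (1,1) i b"
  have pm: "pair_ip (mdiff x y) w = pair_ip x w - pair_ip y w" for x y w
    by (simp add: pair_ip_def mdiff_def algebra_simps)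
  have z1: "zmon (1,1) e = 1" for e by (simp add: zmon_def)
  have tau: "tau k i b = b" by (simp add: tau_def b_def)
  have keyne: "key a \<noteq> key c" if "a < r" "c < r" "a \<noteq> c" for a c
    using sep i that unfolding separable_def key_def b_def by blast
  have off: "key c < key a" if ac: "a < r" "c < r" "NN a c \<noteq> 0" for a c
  proof -
    have "a \<noteq> c" "key a - key c \<ge> 0" using ac(3) unfolding NN_def N_mat_def tau pm key_def
      by (auto split: if_splits)
    thus "key c < key a" using keyne ac by force
  qed
  have inj: "inj_on key {0..<r}"
  proof (rule inj_onI)
    fix x y assume "x \<in> {0..<r}" "y \<in> {0..<r}" "key x = key y"
    thus "x = y" using keyne[of x y] by auto
  qed
  have E: "det (toM r (mexp r NN)) = 1"
    by (rule det_tri[where key=key, OF inj mexp_tri(1)[where key=key, OF off] mexp_tri(2)[where key=key, OF off]])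
  have Gs: "det (toM r (Gsf_mat k p m g (1,1) i b)) = signof \<sigma> * (\<Prod>a<r. g i a)"
    by (rule det_perm_mat[OF sp]) (simp add: Gsf_mat_def gsf_def z1 b_def sv)
  show ?thesis unfolding G_mat_def b_def[symmetric] NN_def[symmetric] toM_mul det_mult[OF toM_carrier toM_carrier] E Gs
    by simp
qed

locale orb =
  fixes k r :: nat and p :: "nat \<Rightarrow> nat \<Rightarrow> nat"
  assumes kpos: "0 < k" and rpos: "0 < r"
  and bij: "\<forall>i<k. bij_betw (p i) {..<r} {..<r}"
  and conn: "link_connected k r p"
begin

definition D :: "(nat \<times> nat) set" where "D = {..<k} \<times> {..<r}"
definition f :: "nat \<Rightarrow> nat \<times> nat" where "f j = (lstep k p ^^ j) (0,0)"

lemma finD: "finite D" unfolding D_def by simp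
lemma cardD: "card D = k * r" unfolding D_def by (simp add: card_cartesian_product)

lemma T_D: assumes "x \<in> D" shows "lstep k p x \<in> D"
proof -
  obtain i a where xi: "x = (i,a)" "i < k" "a < r" using assms unfolding D_def by auto
  have "p i a \<in> p i ` {..<r}" using xi by simp
  hence "p i a < r" using bij xi unfolding bij_betw_def by auto
  moreover have "Suc i mod k < k" using kpos by simp
  ultimately show ?thesis using xi unfolding D_def lstep_def by simp
qed

lemma suc_mod: "i < k \<Longrightarrow> Suc i mod k = (if Suc i = k then 0 else Suc i)"
  by (simp add: mod_Suc)

lemma T_inj: "x \<in> D \<Longrightarrow> y \<in> D \<Longrightarrow> lstep k p x = lstep k p y \<Longrightarrow> x = y"
proof -
  assume x: "x \<in> D" and y: "y \<in> D" and e: "lstep k p x = lstep k p y"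
  obtain i a where xi: "x = (i,a)" by fastforce
  obtain j b where yj: "y = (j,b)" by fastforce
  have ik: "i < k" "j < k" "a < r" "b < r" using x y xi yj unfolding D_def by auto
  have "Suc i mod k = Suc j mod k" using e xi yj unfolding lstep_def by simp
  hence ij: "i = j" using ik by (simp add: suc_mod split: if_splits)
  have "p i a = p i b" using e xi yj ij unfolding lstep_def by simp
  hence "a = b" using bij ik unfolding bij_betw_def inj_on_def by auto
  thus ?thesis using xi yj ij by simp
qed

lemma f0: "f 0 = (0,0)" unfolding f_def by simp
lemma fSuc: "f (Suc j) = lstep k p (f j)" unfolding f_def by simp
lemma f_D: "f j \<in> D"
proof (induction j)
  case 0 show ?case using kpos rpos by (simp add: f0 D_def)
next
  case (Suc j) thus ?case using T_D by (simp add: fSuc)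
qed

lemma f_cancel: "f (i + a) = f (i + b) \<Longrightarrow> f a = f b"
proof (induction i)
  case 0 then show ?case by simp
next
  case (Suc i)
  have "lstep k p (f (i + a)) = lstep k p (f (i + b))" using Suc.prems by (simp add: fSuc)
  hence "f (i + a) = f (i + b)" using T_inj f_D by blast
  thus ?case using Suc.IH by simp
qed

lemma f_period: "f d = f 0 \<Longrightarrow> f (t + d) = f t"
  by (induction t) (auto simp: fSuc)

lemma f_period_mod: assumes "f d = f 0" "0 < d" shows "f t = f (t mod d)"
proof -
  have e: "f (t mod d + d * q) = f (t mod d)" for q
  proof (induction q)
    case 0 show ?case by simp
  next
    case (Suc q)
    have "f (t mod d + d * Suc q) = f ((t mod d + d * q) + d)" by (simp add: algebra_simps)
    also have "\<dots> = f (t mod d + d * q)" using f_period[OF assms(1)] by blast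
    finally show ?case using Suc by simp
  qed
  have "f t = f (t mod d + d * (t div d))" by simp
  also have "\<dots> = f (t mod d)" by (rule e)
  finally show ?thesis .
qed

lemma exists_period: "\<exists>d>0. f d = f 0"
proof -
  have "\<not> inj_on f {..card D}"
  proof
    assume "inj_on f {..card D}"
    hence "card {..card D} \<le> card D" using card_inj_on_le[of f "{..card D}" D] f_D finD by auto
    thus False by simp
  qed
  then obtain a b where ab: "a \<le> card D" "b \<le> card D" "a \<noteq> b" "f a = f b" unfolding inj_on_def by auto
  show ?thesis
  proof (cases "a < b")
    case True
    have "f (a + 0) = f (a + (b - a))" using ab True by simp
    hence "f 0 = f (b - a)" by (rule f_cancel)
    thus ?thesis using True by (intro exI[of _ "b - a"]) auto
  next
    case False
    hence "b < a" using ab by simp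
    have "f (b + 0) = f (b + (a - b))" using ab \<open>b < a\<close> by simp
    hence "f 0 = f (a - b)" by (rule f_cancel)
    thus ?thesis using \<open>b < a\<close> by (intro exI[of _ "a - b"]) auto
  qed
qed

lemma range_f: "range f = D"
proof
  show "range f \<subseteq> D" using f_D by auto
next
  obtain d where d: "d > 0" "f d = f 0" using exists_period by auto
  let ?E = "link_edges k r p"
  show "D \<subseteq> range f"
  proof
    fix y assume "y \<in> D"
    then obtain j b where y: "y = (j,b)" "j < k" "b < r" unfolding D_def by auto
    have "((0,0), y) \<in> (?E \<union> ?E\<inverse>)\<^sup>*" using conn y kpos rpos unfolding link_connected_def by auto
    thus "y \<in> range f"
    proof (induction rule: rtrancl_induct)
      case base then show ?case by (metis f0 rangeI)
    next
      case (step y z)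
      then obtain j where j: "y = f j" by auto
      show ?case
      proof (cases "(y,z) \<in> ?E")
        case True
        hence "z = lstep k p y" unfolding link_edges_def by auto
        thus ?thesis using j fSuc by (metis rangeI)
      next
        case False
        hence "(z,y) \<in> ?E" using step by auto
        hence zD: "z \<in> D" and yz: "y = lstep k p z" unfolding link_edges_def D_def by auto
        have "f j = f (j + d)" using f_period[OF d(2)] by simp
        also have "j + d = Suc (j + d - 1)" using d by simp
        also have "f (Suc (j + d - 1)) = lstep k p (f (j + d - 1))" by (rule fSuc)
        finally have "lstep k p z = lstep k p (f (j + d - 1))" using j yz by simp
        hence "z = f (j + d - 1)" using T_inj zD f_D by blast
        thus ?thesis by simp
      qed
    qed
  qed
qed

definition N :: nat where "N = k * r"

lemma f_inj: "inj_on f {..<N}"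
proof (rule ccontr)
  assume "\<not> inj_on f {..<N}"
  then obtain a0 b0 where ab0: "a0 < N" "b0 < N" "a0 \<noteq> b0" "f a0 = f b0" unfolding inj_on_def
    by auto
  define a where "a = min a0 b0"
  define b where "b = max a0 b0"
  have ab: "a < N" "b < N" "a < b" "f a = f b" using ab0 unfolding a_def b_def by (auto simp: min_def max_def)
  have "f (a + 0) = f (a + (b - a))" using ab by simp
  hence d: "f (b - a) = f 0" using f_cancel[of a 0 "b - a"] by simp
  have "range f \<subseteq> f ` {..<b - a}"
  proof
    fix y assume "y \<in> range f"
    then obtain t where "y = f t" by auto
    hence "y = f (t mod (b - a))" using f_period_mod[OF d, of t] ab by simp
    thus "y \<in> f ` {..<b - a}" using ab by auto
  qed
  hence "card D \<le> card (f ` {..<b - a})" using range_f by (simp add: card_mono)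
  also have "\<dots> \<le> card {..<b - a}" by (rule card_image_le) simp
  also have "\<dots> = b - a" by simp
  finally show False using cardD ab unfolding N_def by simp
qed

lemma f_img: "f ` {..<N} = D"
proof -
  have "f ` {..<N} \<subseteq> D" using f_D by auto
  moreover have "card (f ` {..<N}) = card D" using f_inj cardD card_image unfolding N_def by fastforce
  ultimately show ?thesis using finD by (simp add: card_subset_eq)
qed

lemma f_bij: "bij_betw f {..<N} D" using f_inj f_img unfolding bij_betw_def by simp

lemma f_N: "f N = f 0"
proof -
  have "f N \<in> f ` {..<N}" using f_img f_D by simp
  then obtain i where i: "i < N" "f N = f i" by auto
  have "f (i + (N - i)) = f (i + 0)" using i by simp
  hence e: "f (N - i) = f 0" using f_cancel[of i "N - i" 0] by simp
  show ?thesis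
  proof (cases "i = 0")
    case True thus ?thesis using i by simp
  next
    case False
    hence "N - i < N" "N - i \<noteq> 0" using i by auto
    hence "N - i = 0" using inj_onD[OF f_inj e] by simp
    thus ?thesis using \<open>N - i \<noteq> 0\<close> by simp
  qed
qed


lemma f_the_inv: "x \<in> D \<Longrightarrow> the_inv_into {..<N} f x < N \<and> f (the_inv_into {..<N} f x) = x"
proof -
  assume x: "x \<in> D"
  hence "x \<in> f ` {..<N}" using f_img by simp
  thus ?thesis using the_inv_into_into[OF f_inj, of x "{..<N}"] f_the_inv_into_f[OF f_inj] by auto
qed

lemma the_inv_f: "j < N \<Longrightarrow> the_inv_into {..<N} f (f j) = j"
  using the_inv_into_f_f[OF f_inj] by simp

lemma hol_prod_D: "monodromy k r p g = (\<Prod>x\<in>D. g (fst x) (snd x))"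
proof -
  have "monodromy k r p g = (\<Prod>j<N. g (fst (f j)) (snd (f j)))"
    unfolding monodromy_def N_def f_def by (simp add: hol_prod)
  also have "\<dots> = (\<Prod>x\<in>D. g (fst x) (snd x))"
    using prod.reindex_bij_betw[OF f_bij, of "\<lambda>x. g (fst x) (snd x)"] by simp
  finally show ?thesis .
qed

lemma uniq:
  assumes g: "loc_sys k r g" and g': "loc_sys k r g'"
    and eq: "monodromy k r p g = monodromy k r p g'"
  shows "ls_iso k r p g g'"
proof -
  define G where "G = (\<lambda>x. g (fst x) (snd x))"
  define G' where "G' = (\<lambda>x. g' (fst x) (snd x))"
  have Gnz: "x \<in> D \<Longrightarrow> G x \<noteq> 0" for x using g unfolding loc_sys_def G_def D_def by auto
  have G'nz: "x \<in> D \<Longrightarrow> G' x \<noteq> 0" for x using g' unfolding loc_sys_def G'_def D_def by auto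
  define H where "H = (\<lambda>j. \<Prod>t<j. G' (f t) / G (f t))"
  define idx where "idx = the_inv_into {..<N} f"
  define h where "h = (\<lambda>i a. H (idx (i,a)))"
  have Hnz: "H j \<noteq> 0" for j unfolding H_def using Gnz G'nz f_D by (simp add: prod_zero_iff)
  have HN: "H N = 1"
  proof -
    have "H N = (\<Prod>t<N. G' (f t)) / (\<Prod>t<N. G (f t))" unfolding H_def by (simp add: prod_dividef)
    also have "(\<Prod>t<N. G' (f t)) = (\<Prod>x\<in>D. G' x)" using prod.reindex_bij_betw[OF f_bij, of G'] by simp
    also have "(\<Prod>t<N. G (f t)) = (\<Prod>x\<in>D. G x)" using prod.reindex_bij_betw[OF f_bij, of G] by simp
    also have "(\<Prod>x\<in>D. G x) = (\<Prod>x\<in>D. G' x)" using eq hol_prod_D[of g] hol_prod_D[of g'] unfolding G_def G'_def by simp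
    finally show ?thesis using Gnz G'nz finD by (simp add: prod_zero_iff)
  qed
  show ?thesis unfolding ls_iso_def
  proof (intro exI[of _ h] conjI allI impI)
    fix i a assume "i < k" "a < r"
    thus "h i a \<noteq> 0" unfolding h_def using Hnz by simp
  next
    fix i a assume ia: "i < k" "a < r"
    define x where "x = (i,a)"
    have xD: "x \<in> D" using ia unfolding x_def D_def by simp
    define j where "j = idx x"
    have j: "j < N" "f j = x" using f_the_inv[OF xD] unfolding j_def idx_def by auto
    have Tx: "lstep k p x = f (Suc j)" using j by (simp add: fSuc)
    have HS: "H (Suc j) = H j * (G' x / G x)" unfolding H_def using j by simp
    have lhs: "g' i a * h i a = G' x * H j" unfolding h_def G'_def x_def j_def by simp
    have rhs: "h (Suc i mod k) (p i a) = H (idx (f (Suc j)))" unfolding h_def using Tx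
      by (simp add: x_def lstep_def)
    show "g' i a * h i a = h (Suc i mod k) (p i a) * g i a"
    proof (cases "Suc j < N")
      case True
      hence "idx (f (Suc j)) = Suc j" unfolding idx_def by (rule the_inv_f)
      thus ?thesis using lhs rhs HS Gnz[OF xD] unfolding G_def x_def by (simp add: field_simps)
    next
      case False
      hence SN: "Suc j = N" using j by simp
      have "idx (f (Suc j)) = 0" unfolding SN f_N idx_def using the_inv_f[of 0] j by simp
      hence r: "h (Suc i mod k) (p i a) = 1" using rhs unfolding H_def by simp
      have "H j * (G' x / G x) = 1" using HS HN SN by simp
      hence "G' x * H j = G x" using Gnz[OF xD] by (simp add: field_simps)
      thus ?thesis using lhs r unfolding G_def x_def by simp
    qed
  qed
qed


definition sig :: "nat \<Rightarrow> nat \<Rightarrow> nat" where "sig i a = (if a < r then p i a else a)"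

lemma sig_perm: assumes "i < k" shows "sig i permutes {..<r}"
proof (rule bij_imp_permutes)
  have "bij_betw (p i) {..<r} {..<r}" using bij assms by simp
  thus "bij_betw (sig i) {..<r} {..<r}" by (rule bij_betw_cong[THEN iffD1, rotated]) (simp add: sig_def)
qed (simp add: sig_def)

primrec Qf :: "nat \<Rightarrow> nat \<Rightarrow> nat" where
  "Qf 0 = id"
| "Qf (Suc l) = sig l \<circ> Qf l"

lemma Q_perm: "l \<le> k \<Longrightarrow> Qf l permutes {..<r}"
proof (induction l)
  case 0 then show ?case by (simp only: Qf.simps permutes_id)
next
  case (Suc l)
  have "sig l \<circ> Qf l permutes {..<r}" using Suc by (intro permutes_compose sig_perm) auto
  thus ?case by (simp only: Qf.simps)
qed

lemma Q_sign: "l \<le> k \<Longrightarrow> sign (Qf l) = (\<Prod>i<l. sign (sig i))"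
proof (induction l)
  case 0 then show ?case by simp
next
  case (Suc l)
  have "permutation (sig l)" using sig_perm[of l] Suc.prems permutation_permutes by fastforce
  moreover have "permutation (Qf l)" using Q_perm[of l] Suc.prems permutation_permutes by fastforce
  ultimately have A0: "sign (sig l \<circ> Qf l) = sign (sig l) * sign (Qf l)" by (rule sign_compose)
  have A: "sign (Qf (Suc l)) = sign (sig l) * sign (Qf l)" by (simp only: Qf.simps A0)
  have B: "(\<Prod>i<Suc l. sign (sig i)) = sign (sig l) * sign (Qf l)" using Suc by simp
  from A B show ?case by (simp only:)
qed

lemma T_Q: "l \<le> k \<Longrightarrow> a < r \<Longrightarrow> (lstep k p ^^ l) (0,a) = (l mod k, Qf l a)"
proof (induction l)
  case 0 then show ?case by simp
next
  case (Suc l)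
  have lk: "l < k" using Suc by simp
  have "Qf l a \<in> {..<r}" using permutes_in_image[OF Q_perm[of l]] lk Suc.prems by simp
  hence "sig l (Qf l a) = p l (Qf l a)" unfolding sig_def by simp
  thus ?case using Suc lk by (simp add: lstep_def)
qed

definition QQ where "QQ = Qf k"

lemma f_k: "f (k * j) = (0, (QQ ^^ j) 0)"
proof (induction j)
  case 0 then show ?case by (simp add: f0)
next
  case (Suc j)
  have "snd (f (k * j)) < r" using f_D[of "k * j"] unfolding D_def by auto
  hence lt: "(QQ ^^ j) 0 < r" using Suc by simp
  have "f (k * Suc j) = (lstep k p ^^ k) (f (k * j))" unfolding f_def
    by (simp add: funpow_add algebra_simps)
  also have "\<dots> = (0, QQ ((QQ ^^ j) 0))" using Suc T_Q[OF order_refl lt] by (simp add: QQ_def)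
  finally show ?case by simp
qed

lemma QQ_perm: "QQ permutes {..<r}" unfolding QQ_def by (rule Q_perm) simp

definition cs where "cs = map (\<lambda>j. (QQ ^^ j) 0) [0..<r]"

lemma cs_distinct: "distinct cs"
proof -
  have "inj_on (\<lambda>j. (QQ ^^ j) 0) {0..<r}"
  proof (rule inj_onI)
    fix a b assume ab: "a \<in> {0..<r}" "b \<in> {0..<r}" "(QQ ^^ a) 0 = (QQ ^^ b) 0"
    hence "f (k * a) = f (k * b)" by (simp add: f_k)
    moreover have "k * a < N" "k * b < N" using ab kpos unfolding N_def by auto
    ultimately have "k * a = k * b" using f_inj unfolding inj_on_def by blast
    thus "a = b" using kpos by simp
  qed
  thus ?thesis unfolding cs_def by (simp add: distinct_map)
qed

lemma cs_len: "length cs = r" unfolding cs_def by simp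

lemma cs_set: "set cs = {..<r}"
proof -
  have "(QQ ^^ j) 0 < r" for j using f_D[of "k*j"] f_k[of j] unfolding D_def by auto
  hence "set cs \<subseteq> {..<r}" unfolding cs_def by auto
  moreover have "card (set cs) = r" using cs_distinct cs_len distinct_card by metis
  ultimately show ?thesis by (simp add: card_subset_eq)
qed

lemma QQ_r: "(QQ ^^ r) 0 = 0"
  using f_k[of r] f_N f0 unfolding N_def by simp

lemma QQ_cycle: "QQ = cycle_of_list cs"
proof
  fix x
  show "QQ x = cycle_of_list cs x"
  proof (cases "x < r")
    case True
    then obtain j where j: "j < r" "x = cs ! j" using cs_set cs_len by (metis in_set_conv_nth lessThan_iff)
    have "map (cycle_of_list cs) cs = rotate1 cs" using cyclic_rotation[OF cs_distinct, of 1] by simp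
    hence "cycle_of_list cs x = rotate1 cs ! j" using j cs_len by (metis nth_map)
    also have "\<dots> = cs ! (Suc j mod r)" using j cs_len by (simp add: nth_rotate1)
    also have "\<dots> = (QQ ^^ (Suc j mod r)) 0" unfolding cs_def using j by simp
    also have "\<dots> = (QQ ^^ Suc j) 0"
    proof (cases "Suc j < r")
      case True thus ?thesis by simp
    next
      case False
      hence "Suc j = r" using j by simp
      thus ?thesis using QQ_r by simp
    qed
    also have "\<dots> = QQ x" using j unfolding cs_def by simp
    finally show ?thesis by simp
  next
    case False
    hence "x \<notin> set cs" using cs_set by simp
    thus ?thesis using permutes_not_in[OF QQ_perm] False by (simp add: id_outside_supp)
  qed
qed

lemma sign_sigs: "(\<Prod>i<k. sign (sig i)) = (-1) ^ (r - 1)"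
  using Q_sign[of k] QQ_cycle sign_cycle[OF cs_distinct] cs_len unfolding QQ_def by simp

end

theorem lemma5p3:
  fixes k r :: nat
    and v :: "nat \<Rightarrow> int \<times> int"
    and p :: "nat \<Rightarrow> nat \<Rightarrow> nat"
    and m :: "nat \<Rightarrow> nat \<Rightarrow> int \<times> int"
    and g :: "nat \<Rightarrow> nat \<Rightarrow> complex"
    and n :: "nat \<Rightarrow> nat \<Rightarrow> nat \<Rightarrow> nat \<Rightarrow> complex"
  assumes fan: "complete_fan2 k v"
    and L: "trop_multisection k v r p m"
    and sep: "separable k v r m"
    and conn: "link_connected k r p"
    and ls: "loc_sys k r g"
    and cons: "Theta_consistent k v r p m g n"
  shows "monodromy k r p g = (-1) ^ (r + 1)
       \<and> (\<forall>g'. loc_sys k r g' \<and> monodromy k r p g' = (-1) ^ (r + 1) \<longrightarrow> ls_iso k r p g g')"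
proof -
  have k3: "k \<ge> 3" using fan unfolding complete_fan2_def by simp
  have r1: "r \<ge> 1" and bij: "\<forall>i<k. bij_betw (p i) {..<r} {..<r}"
    using L unfolding trop_multisection_def by auto
  interpret O: orb k r p using k3 r1 bij conn by unfold_locales auto
  define z1 :: "complex \<times> complex" where "z1 = (1,1)"
  define Gz where "Gz = G_mat k v r p m g n z1"
  define cs0 where "cs0 = map (\<lambda>i. i mod k) [0..<Suc k]"
  have cyc: "cycle_around k ZeroC cs0"
    unfolding cycle_around_def
  proof (intro conjI allI impI ballI)
    show "2 \<le> length cs0" using k3 by (simp add: cs0_def)
    have "hd cs0 = 0" unfolding cs0_def by (simp add: upt_conv_Cons del: upt_Suc)
    moreover have "last cs0 = 0" unfolding cs0_def by (simp add: last_map)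
    ultimately show "hd cs0 = last cs0" by simp
  next
    fix c assume "c \<in> set cs0" thus "c < k" using k3 by (auto simp: cs0_def)
  next
    fix c show "face_of_max k ZeroC c" by simp
  next
    fix j assume "Suc j < length cs0"
    hence j: "j < k" by (simp add: cs0_def)
    have "cs0 ! j = j" "cs0 ! Suc j = Suc j mod k" using j unfolding cs0_def
      by (simp_all add: nth_map del: upt_Suc)
    thus "adjacent k (cs0 ! j) (cs0 ! Suc j)" using j k3 unfolding adjacent_def by simp
  qed
  have zc: "fst z1 \<noteq> 0 \<and> snd z1 \<noteq> 0" by (simp add: z1_def)
  have Z: "ZeroC \<in> fan_cones k" by (simp add: fan_cones_def)
  have W: "\<forall>\<alpha><r. \<forall>\<beta><r. walk_prod r Gz cs0 \<alpha> \<beta> = mid \<alpha> \<beta>"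
    using cons cyc zc Z unfolding Theta_consistent_def Gz_def by blast
  have "toM r (walk_prod r Gz cs0) = toM r mid"
    by (rule eq_matI) (use W in \<open>auto simp: toM_def\<close>)
  hence d1: "det (toM r (walk_prod r Gz cs0)) = 1" by (simp add: toM_mid)
  have "det (toM r (walk_prod r Gz cs0)) = (\<Prod>i\<in>{0..<0+k}. det (toM r (Gz (i mod k) (Suc i mod k))))"
    unfolding cs0_def using walk_det[of r Gz "\<lambda>i. i mod k" 0 k] by simp
  also have "\<dots> = (\<Prod>i<k. of_int (sign (O.sig i)) * (\<Prod>a<r. g i a))"
  proof (rule prod.cong)
    show "{0..<0+k} = {..<k}" by auto
  next
    fix i assume "i \<in> {..<k}"
    hence i: "i < k" by simp
    have sp: "O.sig i permutes {0..<r}" using O.sig_perm[OF i] by (simp add: atLeast0LessThan)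
    have sv: "\<And>a. a < r \<Longrightarrow> O.sig i a = p i a" by (simp add: O.sig_def)
    show "det (toM r (Gz (i mod k) (Suc i mod k))) = of_int (sign (O.sig i)) * (\<Prod>a<r. g i a)"
      using det_G[where i=i and k=k and v=v and r=r and m=m and p=p and g=g and n=n and \<sigma>="O.sig i", OF i sep sp sv] i unfolding Gz_def z1_def by simp
  qed
  also have "\<dots> = of_int (\<Prod>i<k. sign (O.sig i)) * (\<Prod>i<k. \<Prod>a<r. g i a)"
    by (simp add: prod.distrib)
  also have "(\<Prod>i<k. \<Prod>a<r. g i a) = monodromy k r p g"
    unfolding O.hol_prod_D O.D_def prod.cartesian_product by (simp add: case_prod_beta)
  finally have e1: "1 = (-1::complex) ^ (r - 1) * monodromy k r p g" using d1 O.sign_sigs by simp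
  have s2: "(-1::complex) ^ (r - 1) * (-1) ^ (r - 1) = 1" by (simp add: power_mult_distrib[symmetric])
  have s3: "(-1::complex) ^ (r + 1) = (-1) ^ (r - 1)"
  proof -
    obtain r' where r': "r = Suc r'" using r1 by (cases r) auto
    show ?thesis unfolding r' by simp
  qed
  have mono: "monodromy k r p g = (-1) ^ (r + 1)"
  proof -
    have "monodromy k r p g = ((-1) ^ (r - 1) * (-1) ^ (r - 1)) * monodromy k r p g" using s2 by simp
    also have "\<dots> = (-1) ^ (r - 1) * ((-1) ^ (r - 1) * monodromy k r p g)" by (simp only: mult.assoc)
    also have "\<dots> = (-1) ^ (r - 1)" using e1 by simp
    finally show ?thesis using s3 by simp
  qed
  show ?thesis
  proof (intro conjI allI impI)
    show "monodromy k r p g = (-1) ^ (r + 1)" by (rule mono)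
  next
    fix g' assume "loc_sys k r g' \<and> monodromy k r p g' = (-1) ^ (r + 1)"
    thus "ls_iso k r p g g'" using O.uniq[OF ls] mono by simp
  qed
qed

end
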